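(* Let $\varphi:\mathbb{R}\to\mathbb{R}$ be smooth and let $\Sigma$ be a properly immersed $[\varphi,\vec e_3]$-minimal surface in $\mathbb{R}^3$ such that $|\dot\varphi(\mu(p))|\le B\sqrt{\mathcal{G}(|p|)}$ outside a compact subset of $\Sigma$, where $B>0$ and $\mathcal{G}:[0,+\infty)\to\mathbb{R}$ is smooth with $\mathcal{G}(0)>0$, $\mathcal{G}'\ge0$, $\mathcal{G}^{-1/2}\notin L^1([0,+\infty))$ and $\limsup_{t\to+\infty}t\mathcal{G}(\sqrt t)/\mathcal{G}(t)<+\infty$. Suppose $\Sigma\subset\mathcal{H}_{\vec v}=\{x:\langle x,\vec v\rangle\le0\}$ for some nonzero $\vec v$ with $\langle\vec v,\vec e_3\rangle=0$. Then either $\Sigma$ is a plane parallel to $\partial\mathcal{H}_{\vec v}$, or $\Sigma$ is not such a plane and there is a divergent sequence $p_n\in\Sigma$ with $\eta(p_n)\to0$.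
   Context: Surfaces are connected, orientable, immersed in $\mathbb{R}^3$, without boundary, with unit normal $N$; $\mu(p)=\langle p,\vec e_3\rangle$, $\eta=\langle N,\vec e_3\rangle$. $\Sigma$ is $[\varphi,\vec e_3]$-minimal if its mean curvature vector $\vec H$ (trace of the second fundamental form) satisfies $\vec H=\dot\varphi(\mu)\eta N$. A sequence is divergent if it eventually leaves every compact subset of $\Sigma$. *)

theory Defs
  imports "HOL-Analysis.Analysis"
begin

fun Ck :: "nat \<Rightarrow> ('a::euclidean_space \<Rightarrow> 'b::real_normed_vector) \<Rightarrow> 'a set \<Rightarrow> bool" where
  "Ck 0 F V = continuous_on V F"
| "Ck (Suc k) F V = (F differentiable_on V \<and>
      (\<forall>b\<in>Basis. Ck k (\<lambda>x. frechet_derivative F (at x) b) V))"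

definition smooth_on :: "('a::euclidean_space \<Rightarrow> 'b::real_normed_vector) \<Rightarrow> 'a set \<Rightarrow> bool" where
  "smooth_on F V \<longleftrightarrow> (\<forall>k. Ck k F V)"

definition e3 :: "real^3" where "e3 = axis 3 1"

definition pd :: "2 \<Rightarrow> (real^2 \<Rightarrow> real^3) \<Rightarrow> real^2 \<Rightarrow> real^3" where
  "pd i F x = frechet_derivative F (at x) (axis i 1)"

definition pd2 :: "2 \<Rightarrow> 2 \<Rightarrow> (real^2 \<Rightarrow> real^3) \<Rightarrow> real^2 \<Rightarrow> real^3" where
  "pd2 i j F x = pd i (pd j F) x"

definition fff_E :: "(real^2 \<Rightarrow> real^3) \<Rightarrow> real^2 \<Rightarrow> real" where
  "fff_E F x = pd 1 F x \<bullet> pd 1 F x"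
definition fff_F :: "(real^2 \<Rightarrow> real^3) \<Rightarrow> real^2 \<Rightarrow> real" where
  "fff_F F x = pd 1 F x \<bullet> pd 2 F x"
definition fff_G :: "(real^2 \<Rightarrow> real^3) \<Rightarrow> real^2 \<Rightarrow> real" where
  "fff_G F x = pd 2 F x \<bullet> pd 2 F x"

definition smooth_immersion :: "(real^2 \<Rightarrow> real^3) \<Rightarrow> (real^2) set \<Rightarrow> bool" where
  "smooth_immersion F V \<longleftrightarrow> open V \<and> smooth_on F V \<and>
     (\<forall>x\<in>V. fff_E F x * fff_G F x - (fff_F F x)\<^sup>2 > 0)"

text \<open>Scalar mean curvature w.r.t. the unit normal n (trace of the second fundamental
 form, no factor 1/2), i.e. the N-component of the mean curvature vector
 g^{ij} (F_ij)^perp.\<close>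
definition mean_curv :: "(real^2 \<Rightarrow> real^3) \<Rightarrow> real^3 \<Rightarrow> real^2 \<Rightarrow> real" where
  "mean_curv F n x =
     (fff_G F x * (pd2 1 1 F x \<bullet> n) - 2 * fff_F F x * (pd2 1 2 F x \<bullet> n)
        + fff_E F x * (pd2 2 2 F x \<bullet> n))
     / (fff_E F x * fff_G F x - (fff_F F x)\<^sup>2)"

text \<open>An abstract surface X (nonempty, connected, Hausdorff, without boundary) with an immersion
 f : X \<rightarrow> R^3: every point has an open neighbourhood U and a homeomorphism psi from an
 open set V of R^2 onto U such that f \<circ> psi is a smooth immersion (this induces the smooth
 structure). N is a continuous unit normal field (orientability).\<close>
definition local_param :: "'a topology \<Rightarrow> ('a \<Rightarrow> real^3) \<Rightarrow> (real^2) set \<Rightarrow> (real^2 \<Rightarrow> 'a) \<Rightarrow> bool" where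
  "local_param X f V \<psi> \<longleftrightarrow> open V \<and> openin X (\<psi> ` V) \<and>
     homeomorphic_map (top_of_set V) (subtopology X (\<psi> ` V)) \<psi> \<and>
     smooth_immersion (f \<circ> \<psi>) V"

definition immersed_surface :: "'a topology \<Rightarrow> ('a \<Rightarrow> real^3) \<Rightarrow> ('a \<Rightarrow> real^3) \<Rightarrow> bool" where
  "immersed_surface X f N \<longleftrightarrow>
     topspace X \<noteq> {} \<and> connected_space X \<and> Hausdorff_space X \<and>
     continuous_map X euclidean f \<and> continuous_map X euclidean N \<and>
     (\<forall>p\<in>topspace X. \<exists>V \<psi>. local_param X f V \<psi> \<and> p \<in> \<psi> ` V) \<and>
     (\<forall>p\<in>topspace X. norm (N p) = 1) \<and>
     (\<forall>V \<psi>. local_param X f V \<psi> \<longrightarrow>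
        (\<forall>x\<in>V. N (\<psi> x) \<bullet> pd 1 (f \<circ> \<psi>) x = 0 \<and> N (\<psi> x) \<bullet> pd 2 (f \<circ> \<psi>) x = 0))"

definition proper_immersion :: "'a topology \<Rightarrow> ('a \<Rightarrow> real^3) \<Rightarrow> bool" where
  "proper_immersion X f \<longleftrightarrow> (\<forall>K. compact K \<longrightarrow> compactin X {p \<in> topspace X. f p \<in> K})"

text \<open>[phi, e3]-minimal: mean curvature vector equals phi'(mu) eta N, i.e. its N-component
 equals phi'(mu) eta (it is normal anyway).\<close>
definition phi_minimal :: "(real \<Rightarrow> real) \<Rightarrow> 'a topology \<Rightarrow> ('a \<Rightarrow> real^3) \<Rightarrow> ('a \<Rightarrow> real^3) \<Rightarrow> bool" where
  "phi_minimal \<phi> X f N \<longleftrightarrow>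
     (\<forall>V \<psi>. local_param X f V \<psi> \<longrightarrow>
        (\<forall>x\<in>V. mean_curv (f \<circ> \<psi>) (N (\<psi> x)) x
                = deriv \<phi> (f (\<psi> x) \<bullet> e3) * (N (\<psi> x) \<bullet> e3)))"

definition divergent_seq :: "'a topology \<Rightarrow> (nat \<Rightarrow> 'a) \<Rightarrow> bool" where
  "divergent_seq X p \<longleftrightarrow> (\<forall>K. compactin X K \<longrightarrow> (\<forall>\<^sub>F n in sequentially. p n \<notin> K))"

end

theory Submission
  imports Defs "HOL-Analysis.Cross3"
begin


lemma Ck_diff: "Ck (Suc k) F V \<Longrightarrow> F differentiable_on V" by simp

lemma pd_eq: "pd i F = (\<lambda>x. frechet_derivative F (at x) (axis i 1))"
  by (simp add: pd_def fun_eq_iff)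

lemma smooth_diff: "smooth_on F V \<Longrightarrow> F differentiable_on V"
  unfolding smooth_on_def by (metis Ck_diff)

lemma smooth_pd_diff:
  fixes F :: "real^2 \<Rightarrow> real^3"
  shows "smooth_on F V \<Longrightarrow> (pd i F) differentiable_on V"
proof -
  assume "smooth_on F V"
  then have "Ck (Suc (Suc 0)) F V" unfolding smooth_on_def by blast
  then have "Ck (Suc 0) (\<lambda>x. frechet_derivative F (at x) (axis i 1)) V"
    by (simp del: Ck.simps(1))
  then show ?thesis unfolding pd_eq by simp
qed

lemma e3_unit [simp]: "e3 \<bullet> e3 = 1" "norm e3 = 1"
  unfolding e3_def by (simp_all add: inner_axis_axis)

lemma normal_parallel:
  fixes u A B N :: "real^3"
  assumes "u \<bullet> A = 0" "u \<bullet> B = 0" "N \<bullet> A = 0" "N \<bullet> B = 0" "N \<bullet> N = 1"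
    and "(A \<bullet> A) * (B \<bullet> B) - (A \<bullet> B)^2 > 0"
  shows "u = (u \<bullet> N) *\<^sub>R N"
proof -
  define c where "c = cross3 A B"
  have "c \<bullet> c = (A \<bullet> A) * (B \<bullet> B) - (A \<bullet> B)^2"
    using norm_cross[of A B] unfolding c_def power2_norm_eq_inner .
  hence cc: "c \<bullet> c > 0" using assms(6) by simp
  have u1: "cross3 u c = 0" unfolding c_def using Lagrange[of u A B] assms by (simp add: inner_commute)
  have N1: "cross3 N c = 0" unfolding c_def using Lagrange[of N A B] assms by (simp add: inner_commute)
  have u2: "(c \<bullet> c) *\<^sub>R u = (c \<bullet> u) *\<^sub>R c" using Lagrange[of c u c] u1 by simp
  have N2: "(c \<bullet> c) *\<^sub>R N = (c \<bullet> N) *\<^sub>R c" using Lagrange[of c N c] N1 by simp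
  have uu: "u = ((c \<bullet> u) / (c \<bullet> c)) *\<^sub>R c"
  proof -
    have "u = (1/(c \<bullet> c)) *\<^sub>R ((c \<bullet> c) *\<^sub>R u)" using cc by simp
    also have "\<dots> = ((c \<bullet> u) / (c \<bullet> c)) *\<^sub>R c" by (simp add: u2)
    finally show ?thesis .
  qed
  have NN: "N = ((c \<bullet> N) / (c \<bullet> c)) *\<^sub>R c"
  proof -
    have "N = (1/(c \<bullet> c)) *\<^sub>R ((c \<bullet> c) *\<^sub>R N)" using cc by simp
    also have "\<dots> = ((c \<bullet> N) / (c \<bullet> c)) *\<^sub>R c" by (simp add: N2)
    finally show ?thesis .
  qed
  have "N \<bullet> N = (c \<bullet> N)^2 / (c \<bullet> c)"
    by (subst (1 2) NN) (use cc in \<open>simp add: power2_eq_square field_simps\<close>)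
  hence cN: "(c \<bullet> N)^2 = c \<bullet> c" using assms(5) cc by (simp add: field_simps)
  have "(u \<bullet> N) *\<^sub>R N = ((c \<bullet> u) * (c \<bullet> N)^2 / (c \<bullet> c)^2) *\<^sub>R c"
    by (subst (1 2) NN) (subst uu, use cc in \<open>simp add: power2_eq_square field_simps\<close>)
  also have "\<dots> = ((c \<bullet> u) / (c \<bullet> c)) *\<^sub>R c" using cN cc by (simp add: power2_eq_square)
  finally show ?thesis using uu by simp
qed

definition hp :: "real^3 \<Rightarrow> real^3" where "hp x = x - (x \<bullet> e3) *\<^sub>R e3"

lemma hp_e3 [simp]: "hp x \<bullet> e3 = 0" by (simp add: hp_def inner_diff_left)

lemma hp_inner: "hp x \<bullet> hp y = x \<bullet> y - (x \<bullet> e3) * (y \<bullet> e3)"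
  by (simp add: hp_def inner_diff_left inner_diff_right inner_commute)

lemma foc:
  fixes g N :: "real^3"
  assumes "g = (g \<bullet> N) *\<^sub>R N" "N \<bullet> N = 1" "\<bar>N \<bullet> e3\<bar> \<ge> \<epsilon>" "\<epsilon> \<ge> 0"
  shows "\<epsilon> * norm (hp g) \<le> \<bar>g \<bullet> e3\<bar>"
proof -
  define a where "a = g \<bullet> N"
  define t where "t = N \<bullet> e3"
  have ge: "g \<bullet> e3 = a * t" using assms(1) unfolding a_def t_def
    by (metis inner_scaleR_left)
  have gg: "g \<bullet> g = a^2" using assms(1,2) unfolding a_def
    by (metis inner_scaleR_left inner_scaleR_right mult.right_neutral power2_eq_square)
  have "(norm (hp g))^2 = a^2 - (a*t)^2" using hp_inner[of g g] ge gg
    by (simp only: power2_norm_eq_inner) (simp add: power2_eq_square)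
  also have "\<dots> \<le> a^2" by simp
  finally have h1: "(norm (hp g))^2 \<le> a^2" .
  have "(\<epsilon> * norm (hp g))^2 \<le> \<epsilon>^2 * a^2" using h1 assms(4)
    by (simp add: power_mult_distrib mult_left_mono)
  also have "\<dots> \<le> t^2 * a^2" using assms(3,4) unfolding t_def
    by (intro mult_right_mono) (auto simp: abs_le_square_iff[symmetric] power2_abs)
  also have "\<dots> = (g \<bullet> e3)^2" using ge by (simp add: power_mult_distrib)
  finally have "(\<epsilon> * norm (hp g))^2 \<le> \<bar>g \<bullet> e3\<bar>^2" by simp
  then show ?thesis using assms(4) by (meson abs_ge_zero power2_le_imp_le)
qed



lemma lp_facts:
  assumes "local_param X f V \<psi>"
  shows "open V" "\<psi> ` V \<subseteq> topspace X" "smooth_immersion (f \<circ> \<psi>) V"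
  using assms unfolding local_param_def by (auto dest: openin_subset)

lemma unit_N: "immersed_surface X f N \<Longrightarrow> p \<in> topspace X \<Longrightarrow> N p \<bullet> N p = 1"
  unfolding immersed_surface_def by (metis norm_eq_1)

lemma first_order:
  assumes surf: "immersed_surface X f N" and p: "p \<in> topspace X"
    and W: "(W has_derivative (\<lambda>y. g \<bullet> y)) (at (f p))"
    and mx: "\<forall>q\<in>topspace X. W (f q) \<le> W (f p)"
  shows "g = (g \<bullet> N p) *\<^sub>R N p"
proof -
  from surf p obtain V \<psi> where lp: "local_param X f V \<psi>" and "p \<in> \<psi> ` V"
    unfolding immersed_surface_def by blast
  then obtain x0 where x0: "x0 \<in> V" "\<psi> x0 = p" by auto
  note lpf = lp_facts[OF lp]
  let ?F = "f \<circ> \<psi>"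
  have "?F differentiable_on V" using lpf(3) smooth_diff unfolding smooth_immersion_def by blast
  hence "?F differentiable (at x0)" using lpf(1) x0(1) differentiable_on_eq_differentiable_at by blast
  hence hd: "(?F has_derivative frechet_derivative ?F (at x0)) (at x0)"
    using frechet_derivative_works by blast
  have W': "(W has_derivative (\<lambda>y. g \<bullet> y)) (at (?F x0))" using W x0 by simp
  have hc: "((\<lambda>x. W (?F x)) has_derivative (\<lambda>u. g \<bullet> frechet_derivative ?F (at x0) u)) (at x0)"
    by (rule has_derivative_compose[OF hd W'])
  have "\<forall>y\<in>V. W (?F y) \<le> W (?F x0)" using mx lpf(2) x0 by auto
  hence z: "(\<lambda>u. g \<bullet> frechet_derivative ?F (at x0) u) = (\<lambda>v. 0)"
    using differential_zero_maxmin[OF x0(1) lpf(1) hc] by blast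
  have g1: "g \<bullet> pd 1 ?F x0 = 0" using fun_cong[OF z, of "axis 1 1"] by (simp add: pd_def)
  have g2: "g \<bullet> pd 2 ?F x0 = 0" using fun_cong[OF z, of "axis 2 1"] by (simp add: pd_def)
  have n: "N (\<psi> x0) \<bullet> pd 1 ?F x0 = 0" "N (\<psi> x0) \<bullet> pd 2 ?F x0 = 0"
    using surf lp x0(1) unfolding immersed_surface_def by blast+
  have D: "(pd 1 ?F x0 \<bullet> pd 1 ?F x0) * (pd 2 ?F x0 \<bullet> pd 2 ?F x0) - (pd 1 ?F x0 \<bullet> pd 2 ?F x0)^2 > 0"
    using lpf(3) x0(1) unfolding smooth_immersion_def fff_E_def fff_F_def fff_G_def by blast
  show ?thesis using normal_parallel[OF g1 g2 n(1) n(2) _ D] unit_N[OF surf p] x0 by simp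
qed

lemma exists_max:
  fixes W :: "real^3 \<Rightarrow> real"
  assumes cont: "continuous_map X euclidean f" and proper: "proper_immersion X f"
    and p1: "p1 \<in> topspace X" and Wc: "continuous_on UNIV W" and C: "closed C"
    and fC: "\<forall>p\<in>topspace X. f p \<in> C"
    and bd: "bounded {x \<in> C. W (f p1) \<le> W x}"
  shows "\<exists>p\<in>topspace X. \<forall>q\<in>topspace X. W (f q) \<le> W (f p)"
proof -
  define S where "S = {x \<in> C. W (f p1) \<le> W x}"
  have "closed {x. W (f p1) \<le> W x}"
    using Wc by (intro closed_Collect_le) (auto intro: continuous_intros)
  moreover have "S = C \<inter> {x. W (f p1) \<le> W x}" unfolding S_def by auto
  ultimately have "closed S" using C by (simp add: closed_Int)
  hence cS: "compact S" using bd unfolding S_def by (simp add: compact_eq_bounded_closed)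
  define K where "K = {p \<in> topspace X. f p \<in> S}"
  have "compactin X K" using proper cS unfolding proper_immersion_def K_def by blast
  hence "compactin euclidean (f ` K)" using image_compactin cont by blast
  hence cK: "compact (f ` K)" by simp
  have p1K: "p1 \<in> K" using p1 fC unfolding K_def S_def by auto
  obtain x where x: "x \<in> f ` K" "\<forall>y\<in>f ` K. W y \<le> W x"
    using continuous_attains_sup[OF cK] p1K continuous_on_subset[OF Wc] by blast
  then obtain p where p: "p \<in> K" "x = f p" by auto
  have "\<forall>q\<in>topspace X. W (f q) \<le> W (f p)"
  proof
    fix q assume q: "q \<in> topspace X"
    show "W (f q) \<le> W (f p)"
    proof (cases "q \<in> K")
      case True then show ?thesis using x p by auto
    next
      case False
      hence "W (f q) < W (f p1)" using q fC unfolding K_def S_def by auto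
      also have "W (f p1) \<le> W (f p)" using x(2) p p1K by auto
      finally show ?thesis by simp
    qed
  qed
  then show ?thesis using p K_def by auto
qed



lemma dist_add_self: "dist x (x + v) = norm (v::'a::real_normed_vector)"
  by (simp add: dist_norm)

lemma line_deriv:
  fixes F :: "real^2 \<Rightarrow> real^3"
  assumes "(F has_derivative D) (at (x + s *\<^sub>R a + c))"
  shows "((\<lambda>t. w \<bullet> F (x + t *\<^sub>R a + c)) has_real_derivative (w \<bullet> D a)) (at s)"
proof -
  have l: "((\<lambda>t. x + t *\<^sub>R a + c) has_derivative (\<lambda>t. t *\<^sub>R a)) (at s)"
    by (auto intro!: derivative_eq_intros)
  have "((\<lambda>t. F (x + t *\<^sub>R a + c)) has_derivative (\<lambda>t. D (t *\<^sub>R a))) (at s)"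
    using has_derivative_compose[OF l assms] by simp
  hence "((\<lambda>t. w \<bullet> F (x + t *\<^sub>R a + c)) has_derivative (\<lambda>t. w \<bullet> D (t *\<^sub>R a))) (at s)"
    by (rule has_derivative_inner_right)
  moreover have "\<And>t. t * (w \<bullet> D a) = w \<bullet> D (t *\<^sub>R a)"
    using has_derivative_bounded_linear[OF assms] by (simp add: linear_simps)
  ultimately show ?thesis by (rule has_derivative_imp_has_field_derivative)
qed

lemma young_half:
  fixes F :: "real^2 \<Rightarrow> real^3" and w :: "real^3"
  assumes r: "r > 0" and DF: "\<forall>y\<in>ball x r. (F has_derivative DF y) (at y)"
    and a: "norm a = 1" and b: "norm b = 1"
    and DA: "((\<lambda>y. DF y a) has_derivative DA) (at x)"
    and e: "e > 0"
  shows "\<exists>h0>0. \<forall>h. 0 < h \<and> h < h0 \<longrightarrow>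
     \<bar>w \<bullet> (F (x + h *\<^sub>R a + h *\<^sub>R b) - F (x + h *\<^sub>R a) - F (x + h *\<^sub>R b) + F x) - h^2 * (w \<bullet> DA b)\<bar>
       \<le> 3 * e * h^2 * norm w"
proof -
  let ?P = "\<lambda>y. DF y a"
  have blA: "bounded_linear DA" using DA has_derivative_bounded_linear by blast
  obtain d where d: "d > 0" "\<forall>y. norm (y - x) < d \<longrightarrow> norm (?P y - ?P x - DA (y - x)) \<le> e * norm (y - x)"
    using DA e unfolding has_derivative_at_alt by blast
  define h0 where "h0 = min d r / 2"
  have h0: "h0 > 0" "2 * h0 \<le> d" "2 * h0 \<le> r" using d r unfolding h0_def by auto
  have main: "\<bar>w \<bullet> (F (x + h *\<^sub>R a + h *\<^sub>R b) - F (x + h *\<^sub>R a) - F (x + h *\<^sub>R b) + F x) - h^2 * (w \<bullet> DA b)\<bar>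
       \<le> 3 * e * h^2 * norm w" if h: "0 < h" "h < h0" for h
  proof -
    define \<psi> where "\<psi> = (\<lambda>s. w \<bullet> F (x + s *\<^sub>R a + h *\<^sub>R b) - w \<bullet> F (x + s *\<^sub>R a + 0))"
    have nb: "norm (s *\<^sub>R a + h *\<^sub>R b) \<le> 2 * h" "norm (s *\<^sub>R a) \<le> h" if "0 \<le> s" "s \<le> h" for s
    proof -
      have "norm (s *\<^sub>R a + h *\<^sub>R b) \<le> norm (s *\<^sub>R a) + norm (h *\<^sub>R b)" by (rule norm_triangle_ineq)
      also have "\<dots> = s + h" using a b that h by simp
      finally show "norm (s *\<^sub>R a + h *\<^sub>R b) \<le> 2 * h" using that by simp
      show "norm (s *\<^sub>R a) \<le> h" using a that by simp
    qed
    have inb: "x + s *\<^sub>R a + h *\<^sub>R b \<in> ball x r" "x + s *\<^sub>R a + 0 \<in> ball x r" if "0 \<le> s" "s \<le> h" for s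
      using nb[OF that] h h0 by (auto simp: dist_add_self add.assoc)
    have der: "(\<psi> has_real_derivative (w \<bullet> ?P (x + s *\<^sub>R a + h *\<^sub>R b) - w \<bullet> ?P (x + s *\<^sub>R a + 0))) (at s)"
      if "0 \<le> s" "s \<le> h" for s
      unfolding \<psi>_def
      by (intro DERIV_diff line_deriv) (use DF inb[OF that] in auto)
    obtain \<sigma> where \<sigma>: "0 < \<sigma>" "\<sigma> < h" "\<psi> h - \<psi> 0 = (h - 0) * (w \<bullet> ?P (x + \<sigma> *\<^sub>R a + h *\<^sub>R b) - w \<bullet> ?P (x + \<sigma> *\<^sub>R a + 0))"
      using MVT2[OF h(1) der] by blast
    have eq\<psi>: "\<psi> h - \<psi> 0 = w \<bullet> (F (x + h *\<^sub>R a + h *\<^sub>R b) - F (x + h *\<^sub>R a) - F (x + h *\<^sub>R b) + F x)"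
      unfolding \<psi>_def by (simp add: inner_diff_right inner_add_right add.commute add.left_commute)
    define y1 where "y1 = x + \<sigma> *\<^sub>R a + h *\<^sub>R b"
    define y2 where "y2 = x + \<sigma> *\<^sub>R a"
    have n1: "norm (y1 - x) \<le> 2 * h" using nb(1)[of \<sigma>] \<sigma> unfolding y1_def by (simp add: add.assoc)
    have n2: "norm (y2 - x) \<le> h" using nb(2)[of \<sigma>] \<sigma> unfolding y2_def by simp
    have e1: "norm (?P y1 - ?P x - DA (y1 - x)) \<le> e * (2 * h)"
      using d(2)[rule_format, of y1] n1 h h0 e by (smt (verit) mult_left_mono)
    have e2: "norm (?P y2 - ?P x - DA (y2 - x)) \<le> e * h"
      using d(2)[rule_format, of y2] n2 h h0 e by (smt (verit) mult_left_mono)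
    have "DA (y1 - x) - DA (y2 - x) = DA (y1 - y2)" using blA by (simp add: linear_simps)
    also have "y1 - y2 = h *\<^sub>R b" unfolding y1_def y2_def by simp
    also have "DA (h *\<^sub>R b) = h *\<^sub>R DA b" using blA by (simp add: linear_simps)
    finally have lin: "DA (y1 - x) - DA (y2 - x) = h *\<^sub>R DA b" .
    have "?P y1 - ?P y2 - h *\<^sub>R DA b = (?P y1 - ?P x - DA (y1 - x)) - (?P y2 - ?P x - DA (y2 - x))"
      using lin by (simp add: algebra_simps)
    hence "norm (?P y1 - ?P y2 - h *\<^sub>R DA b) \<le> e * (2 * h) + e * h"
      using e1 e2 norm_triangle_ineq4 by (smt (verit))
    hence nd: "norm (?P y1 - ?P y2 - h *\<^sub>R DA b) \<le> 3 * e * h" by simp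
    have "\<bar>w \<bullet> (?P y1 - ?P y2 - h *\<^sub>R DA b)\<bar> \<le> norm w * (3 * e * h)"
      using Cauchy_Schwarz_ineq2[of w] nd by (smt (verit) mult_left_mono norm_ge_zero)
    hence "\<bar>(w \<bullet> ?P y1 - w \<bullet> ?P y2) - h * (w \<bullet> DA b)\<bar> \<le> norm w * (3 * e * h)"
      by (simp add: inner_diff_right)
    hence "h * \<bar>(w \<bullet> ?P y1 - w \<bullet> ?P y2) - h * (w \<bullet> DA b)\<bar> \<le> h * (norm w * (3 * e * h))"
      using h by (simp add: mult_left_mono)
    moreover have "h * (w \<bullet> ?P y1 - w \<bullet> ?P y2) - h^2 * (w \<bullet> DA b) = h * ((w \<bullet> ?P y1 - w \<bullet> ?P y2) - h * (w \<bullet> DA b))"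
      by (simp add: power2_eq_square algebra_simps)
    ultimately have "\<bar>h * (w \<bullet> ?P y1 - w \<bullet> ?P y2) - h^2 * (w \<bullet> DA b)\<bar> \<le> h * (norm w * (3 * e * h))"
      using h by (simp add: abs_mult)
    hence "\<bar>h * (w \<bullet> ?P y1 - w \<bullet> ?P y2) - h^2 * (w \<bullet> DA b)\<bar> \<le> 3 * e * h^2 * norm w"
      by (simp add: power2_eq_square algebra_simps)
    then show ?thesis using \<sigma>(3) eq\<psi> unfolding y1_def y2_def by simp
  qed
  show ?thesis using h0(1) main by blast
qed

lemma young:
  fixes F :: "real^2 \<Rightarrow> real^3"
  assumes V: "open V" "x \<in> V" and dF: "F differentiable_on V"
    and d1: "pd 1 F differentiable (at x)" and d2: "pd 2 F differentiable (at x)"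
  shows "pd2 1 2 F x = pd2 2 1 F x"
proof -
  obtain r where r: "r > 0" "ball x r \<subseteq> V" using V open_contains_ball by blast
  define DF where "DF = (\<lambda>y. frechet_derivative F (at y))"
  have DF: "\<forall>y\<in>ball x r. (F has_derivative DF y) (at y)"
    using r dF V(1) unfolding DF_def
    by (metis differentiable_on_eq_differentiable_at frechet_derivative_works subsetD)
  define A where "A = pd2 2 1 F x"
  define B where "B = pd2 1 2 F x"
  define DA1 where "DA1 = frechet_derivative (pd 1 F) (at x)"
  define DA2 where "DA2 = frechet_derivative (pd 2 F) (at x)"
  have hd1: "((\<lambda>y. DF y (axis 1 1)) has_derivative DA1) (at x)"
    using d1 unfolding DA1_def DF_def pd_eq by (simp add: frechet_derivative_works)
  have hd2: "((\<lambda>y. DF y (axis 2 1)) has_derivative DA2) (at x)"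
    using d2 unfolding DA2_def DF_def pd_eq by (simp add: frechet_derivative_works)
  have A: "A = DA1 (axis 2 1)" unfolding A_def DA1_def pd2_def pd_def[of 2 "pd 1 F"] ..
  have B: "B = DA2 (axis 1 1)" unfolding B_def DA2_def pd2_def pd_def[of 1 "pd 2 F"] ..
  define w where "w = B - A"
  have bnd: "\<bar>w \<bullet> A - w \<bullet> B\<bar> \<le> 6 * e * norm w" if e: "e > 0" for e
  proof -
    obtain h1 where h1: "h1 > 0" "\<forall>h. 0 < h \<and> h < h1 \<longrightarrow>
       \<bar>w \<bullet> (F (x + h *\<^sub>R axis 1 1 + h *\<^sub>R axis 2 1) - F (x + h *\<^sub>R axis 1 1) - F (x + h *\<^sub>R axis 2 1) + F x) - h^2 * (w \<bullet> A)\<bar>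
       \<le> 3 * e * h^2 * norm w"
      using young_half[OF r(1) DF norm_axis_1 norm_axis_1 hd1 e, of w] A by blast
    obtain h2 where h2: "h2 > 0" "\<forall>h. 0 < h \<and> h < h2 \<longrightarrow>
       \<bar>w \<bullet> (F (x + h *\<^sub>R axis 2 1 + h *\<^sub>R axis 1 1) - F (x + h *\<^sub>R axis 2 1) - F (x + h *\<^sub>R axis 1 1) + F x) - h^2 * (w \<bullet> B)\<bar>
       \<le> 3 * e * h^2 * norm w"
      using young_half[OF r(1) DF norm_axis_1 norm_axis_1 hd2 e, of w] B by blast
    define h where "h = min h1 h2 / 2"
    have h: "0 < h" "h < h1" "h < h2" using h1 h2 unfolding h_def by auto
    define \<Delta> where "\<Delta> = w \<bullet> (F (x + h *\<^sub>R axis 1 1 + h *\<^sub>R axis 2 1) - F (x + h *\<^sub>R axis 1 1) - F (x + h *\<^sub>R axis 2 1) + F x)"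
    have "x + h *\<^sub>R axis 2 1 + h *\<^sub>R axis 1 1 = x + h *\<^sub>R axis 1 1 + h *\<^sub>R axis 2 1"
      by (simp add: algebra_simps)
    hence D2: "w \<bullet> (F (x + h *\<^sub>R axis 2 1 + h *\<^sub>R axis 1 1) - F (x + h *\<^sub>R axis 2 1) - F (x + h *\<^sub>R axis 1 1) + F x) = \<Delta>"
      unfolding \<Delta>_def by (simp add: algebra_simps)
    have i1: "\<bar>\<Delta> - h^2 * (w \<bullet> A)\<bar> \<le> 3 * e * h^2 * norm w" using h1(2) h unfolding \<Delta>_def by blast
    have i2: "\<bar>\<Delta> - h^2 * (w \<bullet> B)\<bar> \<le> 3 * e * h^2 * norm w" using h2(2) h D2 by metis
    have hh: "h^2 * (w \<bullet> A) - h^2 * (w \<bullet> B) = h^2 * (w \<bullet> A - w \<bullet> B)" by (simp add: right_diff_distrib)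
    have "h^2 * \<bar>w \<bullet> A - w \<bullet> B\<bar> = \<bar>h^2 * (w \<bullet> A) - h^2 * (w \<bullet> B)\<bar>"
      unfolding hh by (simp add: abs_mult)
    also have "\<dots> \<le> h^2 * (6 * e * norm w)" using i1 i2 by (simp add: algebra_simps abs_le_iff)
    finally show ?thesis using h(1) by (simp add: mult_le_cancel_left)
  qed
  have "w \<bullet> A - w \<bullet> B = 0"
  proof (rule ccontr)
    assume ne: "w \<bullet> A - w \<bullet> B \<noteq> 0"
    define e where "e = \<bar>w \<bullet> A - w \<bullet> B\<bar> / (12 * (norm w + 1))"
    have "12 * (norm w + 1) > 0" by (simp add: add_nonneg_pos)
    hence e: "e > 0" using ne unfolding e_def by (intro divide_pos_pos) auto
    have "6 * e * norm w = (\<bar>w \<bullet> A - w \<bullet> B\<bar> / 2) * (norm w / (norm w + 1))"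
    proof -
      have p: "2 + norm w * 2 > 0" "12 + norm w * 12 > 0" by (simp_all add: add_pos_nonneg)
      show ?thesis unfolding e_def using p by (simp add: field_simps)
    qed
    also have "\<dots> \<le> (\<bar>w \<bullet> A - w \<bullet> B\<bar> / 2) * 1"
      by (intro mult_left_mono) (auto simp: divide_le_eq_1 add_nonneg_pos)
    finally have "6 * e * norm w \<le> \<bar>w \<bullet> A - w \<bullet> B\<bar> / 2" by simp
    with bnd[OF e] ne show False by simp
  qed
  hence "w \<bullet> w = 0" unfolding w_def by (simp add: inner_diff_left inner_diff_right inner_commute)
  hence "B = A" unfolding w_def by simp
  thus ?thesis unfolding A_def B_def by simp
qed



lemma so1:
  fixes k k1 :: "real \<Rightarrow> real"
  assumes r: "r > 0" and d: "\<forall>t. \<bar>t\<bar> < r \<longrightarrow> (k has_real_derivative k1 t) (at t)"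
    and d2: "(k1 has_real_derivative K2) (at 0)" and mx: "\<forall>t. \<bar>t\<bar> < r \<longrightarrow> k t \<le> k 0"
  shows "K2 \<le> 0"
proof (rule ccontr)
  assume "\<not> K2 \<le> 0" hence K: "K2 > 0" by simp
  have k10: "k1 0 = 0"
    by (rule DERIV_local_max[OF d[rule_format, of 0] r]) (use r mx in auto)
  obtain e where e: "e > 0" "\<forall>h>0. h < e \<longrightarrow> k1 0 < k1 (0 + h)"
    using DERIV_pos_inc_right[OF d2 K] by blast
  define t where "t = min e r / 2"
  have t: "0 < t" "t < e" "t < r" using e r unfolding t_def by auto
  have "\<And>x. 0 \<le> x \<Longrightarrow> x \<le> t \<Longrightarrow> (k has_real_derivative k1 x) (at x)"
    using d t by auto
  then obtain z where z: "0 < z" "z < t" "k t - k 0 = (t - 0) * k1 z"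
    using MVT2[OF t(1)] by blast
  have "k1 z > 0" using e(2) z t k10 by auto
  hence "t * k1 z > 0" using t by (simp add: mult_pos_pos)
  hence "k t > k 0" using z by simp
  moreover have "k t \<le> k 0" using mx t by auto
  ultimately show False by simp
qed

lemma bl_hp: "bounded_linear hp"
  unfolding hp_def by (intro bounded_linear_intros)

lemma hp_lin: "hp (a *\<^sub>R x + b *\<^sub>R y) = a *\<^sub>R hp x + b *\<^sub>R hp y" "hp (a *\<^sub>R x) = a *\<^sub>R hp x"
  using bl_hp by (simp_all add: linear_simps)

lemma hp_inner1: "hp x \<bullet> y = hp x \<bullet> hp y"
  by (simp add: hp_def inner_diff_left inner_diff_right inner_commute)

lemma Q_deriv: "((\<lambda>y. hp y \<bullet> hp y) has_derivative (\<lambda>h. (2 *\<^sub>R hp y) \<bullet> h)) (at y)"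
proof -
  have "((\<lambda>y. hp y \<bullet> hp y) has_derivative (\<lambda>h. hp y \<bullet> hp h + hp h \<bullet> hp y)) (at y)"
    by (intro has_derivative_inner bounded_linear.has_derivative[OF bl_hp] has_derivative_ident)
  moreover have "(\<lambda>h. hp y \<bullet> hp h + hp h \<bullet> hp y) = (\<lambda>h. (2 *\<^sub>R hp y) \<bullet> h)"
    by (auto simp: fun_eq_iff hp_def inner_diff_left inner_diff_right inner_commute algebra_simps)
  ultimately show ?thesis by simp
qed

lemma comp_line:
  fixes G :: "'a::real_normed_vector \<Rightarrow> 'b::real_normed_vector"
  assumes "(G has_derivative D) (at (x0 + t *\<^sub>R u))"
  shows "((\<lambda>s. G (x0 + s *\<^sub>R u)) has_derivative (\<lambda>s. s *\<^sub>R D u)) (at t)"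
proof -
  have l: "((\<lambda>s. x0 + s *\<^sub>R u) has_derivative (\<lambda>s. s *\<^sub>R u)) (at t)"
    by (auto intro!: derivative_eq_intros)
  have "((\<lambda>s. G (x0 + s *\<^sub>R u)) has_derivative (\<lambda>s. D (s *\<^sub>R u))) (at t)"
    using has_derivative_compose[OF l assms] by simp
  moreover have "(\<lambda>s. D (s *\<^sub>R u)) = (\<lambda>s. s *\<^sub>R D u)"
    using has_derivative_bounded_linear[OF assms] by (simp add: linear_simps fun_eq_iff)
  ultimately show ?thesis by simp
qed

lemma no_max_hq:
  fixes \<phi> :: "real \<Rightarrow> real"
  assumes surf: "immersed_surface X f N" and minimal: "phi_minimal \<phi> X f N"
    and p: "p \<in> topspace X"
    and mx: "\<forall>q\<in>topspace X. hp (f q) \<bullet> hp (f q) \<le> hp (f p) \<bullet> hp (f p)"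
  shows False
proof -
  from surf p obtain V \<psi> where lp: "local_param X f V \<psi>" and "p \<in> \<psi> ` V"
    unfolding immersed_surface_def by blast
  then obtain x0 where x0: "x0 \<in> V" "\<psi> x0 = p" by auto
  note lpf = lp_facts[OF lp]
  define F where "F = f \<circ> \<psi>"
  have sF: "smooth_on F V" using lpf(3) unfolding smooth_immersion_def F_def by blast
  have dF: "F differentiable_on V" using smooth_diff[OF sF] .
  have dP: "pd j F differentiable (at x0)" for j
    using smooth_pd_diff[OF sF, of j] lpf(1) x0(1) differentiable_on_eq_differentiable_at by blast
  have sym: "pd2 2 1 F x0 = pd2 1 2 F x0" using young[OF lpf(1) x0(1) dF dP dP] by simp
  obtain r where r: "r > 0" "ball x0 r \<subseteq> V" using lpf(1) x0(1) open_contains_ball by blast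
  define DF where "DF = (\<lambda>y. frechet_derivative F (at y))"
  have hasF: "(F has_derivative DF y) (at y)" if "y \<in> V" for y
    using that dF lpf(1) unfolding DF_def
    by (metis differentiable_on_eq_differentiable_at frechet_derivative_works)
  define Dp where "Dp = (\<lambda>j. frechet_derivative (pd j F) (at x0))"
  have hasP: "(pd j F has_derivative Dp j) (at x0)" for j
    using dP unfolding Dp_def by (simp add: frechet_derivative_works)
  define N0 where "N0 = N (\<psi> x0)"
  define Y0 where "Y0 = hp (F x0)"
  define lam where "lam = Y0 \<bullet> N0"
  have FV: "\<forall>y\<in>V. hp (F y) \<bullet> hp (F y) \<le> Y0 \<bullet> Y0"
    using mx lpf(2) x0 unfolding F_def Y0_def by auto
  have "2 *\<^sub>R hp (f p) = ((2 *\<^sub>R hp (f p)) \<bullet> N p) *\<^sub>R N p"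
    by (rule first_order[OF surf p Q_deriv mx])
  hence "2 *\<^sub>R Y0 = (2 * lam) *\<^sub>R N0" unfolding Y0_def lam_def N0_def F_def using x0 by simp
  hence Y0: "Y0 = lam *\<^sub>R N0" by (metis scaleR_scaleR scaleR_cancel_left zero_neq_numeral)
  have "lam * (N0 \<bullet> e3) = 0" using hp_e3[of "F x0"] unfolding Y0_def[symmetric] by (subst (asm) Y0) simp
  moreover have mc: "mean_curv F N0 x0 = deriv \<phi> (f (\<psi> x0) \<bullet> e3) * (N0 \<bullet> e3)"
    using minimal lp x0(1) unfolding phi_minimal_def F_def N0_def by blast
  ultimately have lmc: "lam * mean_curv F N0 x0 = 0" by auto
  define E where "E = fff_E F x0"
  define Fc where "Fc = fff_F F x0"
  define G where "G = fff_G F x0"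
  define D where "D = E * G - Fc^2"
  have D: "D > 0" using lpf(3) x0(1) unfolding smooth_immersion_def D_def E_def Fc_def G_def F_def by blast
  define L11 where "L11 = pd2 1 1 F x0 \<bullet> N0"
  define L12 where "L12 = pd2 1 2 F x0 \<bullet> N0"
  define L22 where "L22 = pd2 2 2 F x0 \<bullet> N0"
  define z1 where "z1 = pd 1 F x0 \<bullet> e3"
  define z2 where "z2 = pd 2 F x0 \<bullet> e3"
  have mean0: "lam * (G * L11 - 2 * Fc * L12 + E * L22) = 0"
    using lmc D unfolding mean_curv_def L11_def L12_def L22_def E_def Fc_def G_def D_def
    by (simp add: field_simps)
  define K2 where "K2 = (\<lambda>a b. 2 * ((a^2 * E + 2 * a * b * Fc + b^2 * G) - (a * z1 + b * z2)^2)
        + 2 * lam * (a^2 * L11 + 2 * a * b * L12 + b^2 * L22))"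
  have K2: "K2 a b \<le> 0" for a b
  proof -
    define u where "u = a *\<^sub>R axis 1 1 + b *\<^sub>R (axis 2 1 :: real^2)"
    define Fu where "Fu = (\<lambda>y. a *\<^sub>R pd 1 F y + b *\<^sub>R pd 2 F y)"
    have DFu: "DF y u = Fu y" if "y \<in> V" for y
      using has_derivative_bounded_linear[OF hasF[OF that]]
      unfolding u_def Fu_def pd_def DF_def by (simp add: linear_simps)
    have Dpu: "Dp j u = a *\<^sub>R pd2 1 j F x0 + b *\<^sub>R pd2 2 j F x0" for j
      using has_derivative_bounded_linear[OF hasP[of j]]
      unfolding u_def pd2_def pd_def[of _ "pd j F"] Dp_def by (simp add: linear_simps)
    define r1 where "r1 = r / (norm u + 1)"
    have r1: "r1 > 0" unfolding r1_def using r by (simp add: add_nonneg_pos)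
    have inV: "x0 + t *\<^sub>R u \<in> V" if "\<bar>t\<bar> < r1" for t
    proof -
      have "\<bar>t\<bar> * norm u \<le> \<bar>t\<bar> * (norm u + 1)" by (simp add: mult_left_mono)
      also have "\<dots> < r1 * (norm u + 1)" using that by (simp add: add_nonneg_pos)
      also have "\<dots> = r" unfolding r1_def
        by (metis add_nonneg_pos nonzero_eq_divide_eq norm_ge_zero zero_less_one order_less_irrefl)
      finally have "dist x0 (x0 + t *\<^sub>R u) < r" by (simp add: dist_add_self)
      thus ?thesis using r by auto
    qed
    define k where "k = (\<lambda>t. hp (F (x0 + t *\<^sub>R u)) \<bullet> hp (F (x0 + t *\<^sub>R u)))"
    define k1 where "k1 = (\<lambda>t. 2 * (hp (F (x0 + t *\<^sub>R u)) \<bullet> Fu (x0 + t *\<^sub>R u)))"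
    have dk: "\<forall>t. \<bar>t\<bar> < r1 \<longrightarrow> (k has_real_derivative k1 t) (at t)"
    proof (intro allI impI)
      fix t assume t: "\<bar>t\<bar> < r1"
      define y where "y = x0 + t *\<^sub>R u"
      have y: "y \<in> V" using inV[OF t] unfolding y_def .
      have c1: "((\<lambda>s. F (x0 + s *\<^sub>R u)) has_derivative (\<lambda>s. s *\<^sub>R DF y u)) (at t)"
        using comp_line[of F "DF y" x0 t u] hasF[OF y] unfolding y_def by simp
      have "(k has_derivative (\<lambda>s. (2 *\<^sub>R hp (F y)) \<bullet> (s *\<^sub>R DF y u))) (at t)"
      proof -
        have q: "((\<lambda>y. hp y \<bullet> hp y) has_derivative (\<lambda>h. (2 *\<^sub>R hp (F y)) \<bullet> h)) (at (F (x0 + t *\<^sub>R u)))"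
          using Q_deriv[of "F y"] unfolding y_def .
        show ?thesis unfolding k_def using has_derivative_compose[OF c1 q] by simp
      qed
      moreover have "\<And>s. s * k1 t = (2 *\<^sub>R hp (F y)) \<bullet> (s *\<^sub>R DF y u)"
        using DFu[OF y] unfolding k1_def y_def by simp
      ultimately show "(k has_real_derivative k1 t) (at t)"
        by (rule has_derivative_imp_has_field_derivative)
    qed
    define KK where "KK = 2 * (Y0 \<bullet> (a *\<^sub>R Dp 1 u + b *\<^sub>R Dp 2 u) + hp (Fu x0) \<bullet> Fu x0)"
    have dk1: "(k1 has_real_derivative KK) (at 0)"
    proof -
      have c1: "((\<lambda>s. F (x0 + s *\<^sub>R u)) has_derivative (\<lambda>s. s *\<^sub>R DF x0 u)) (at 0)"
        using comp_line[of F "DF x0" x0 0 u] hasF[OF x0(1)] by simp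
      have h1: "((\<lambda>s. hp (F (x0 + s *\<^sub>R u))) has_derivative (\<lambda>s. hp (s *\<^sub>R DF x0 u))) (at 0)"
        using has_derivative_compose[OF c1 bounded_linear.has_derivative[OF bl_hp has_derivative_ident]]
        by simp
      have cj: "((\<lambda>s. pd j F (x0 + s *\<^sub>R u)) has_derivative (\<lambda>s. s *\<^sub>R Dp j u)) (at 0)" for j
        using comp_line[of "pd j F" "Dp j" x0 0 u] hasP[of j] by simp
      have h2: "((\<lambda>s. Fu (x0 + s *\<^sub>R u)) has_derivative (\<lambda>s. a *\<^sub>R (s *\<^sub>R Dp 1 u) + b *\<^sub>R (s *\<^sub>R Dp 2 u))) (at 0)"
        unfolding Fu_def by (intro has_derivative_add has_derivative_scaleR_right cj)
      have "(k1 has_derivative (\<lambda>s. 2 * (hp (F (x0 + 0 *\<^sub>R u)) \<bullet> (a *\<^sub>R (s *\<^sub>R Dp 1 u) + b *\<^sub>R (s *\<^sub>R Dp 2 u))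
             + hp (s *\<^sub>R DF x0 u) \<bullet> Fu (x0 + 0 *\<^sub>R u)))) (at 0)"
        unfolding k1_def by (intro has_derivative_mult_right has_derivative_inner h1 h2)
      moreover have "\<And>s. s * KK = 2 * (hp (F (x0 + 0 *\<^sub>R u)) \<bullet> (a *\<^sub>R (s *\<^sub>R Dp 1 u) + b *\<^sub>R (s *\<^sub>R Dp 2 u))
             + hp (s *\<^sub>R DF x0 u) \<bullet> Fu (x0 + 0 *\<^sub>R u))"
        unfolding KK_def DFu[OF x0(1)] Y0_def hp_lin
        by (simp add: inner_add_right inner_scaleR_right algebra_simps)
      ultimately show ?thesis by (rule has_derivative_imp_has_field_derivative)
    qed
    have mk: "\<forall>t. \<bar>t\<bar> < r1 \<longrightarrow> k t \<le> k 0"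
      using FV inV unfolding k_def Y0_def by simp
    have KK0: "KK \<le> 0" by (rule so1[OF r1 dk dk1 mk])
    have e1: "Y0 \<bullet> (a *\<^sub>R Dp 1 u + b *\<^sub>R Dp 2 u) = lam * (a^2 * L11 + 2 * a * b * L12 + b^2 * L22)"
      unfolding Dpu Y0 L11_def L12_def L22_def sym
      by (simp only: inner_add_right inner_scaleR_right inner_scaleR_left inner_commute[of N0])
        (simp add: power2_eq_square algebra_simps)
    have e2: "hp (Fu x0) \<bullet> Fu x0 = (a^2 * E + 2 * a * b * Fc + b^2 * G) - (a * z1 + b * z2)^2"
    proof -
      have "hp (Fu x0) \<bullet> Fu x0 = Fu x0 \<bullet> Fu x0 - (Fu x0 \<bullet> e3)^2"
        by (simp add: hp_def inner_diff_left inner_diff_right power2_eq_square inner_commute)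
      also have "\<dots> = (a^2 * E + 2 * a * b * Fc + b^2 * G) - (a * z1 + b * z2)^2"
        unfolding Fu_def E_def Fc_def G_def fff_E_def fff_F_def fff_G_def z1_def z2_def
        by (simp only: inner_add_right inner_add_left inner_scaleR_right inner_scaleR_left
            inner_commute[of "pd 2 F x0" "pd 1 F x0"]) (simp add: power2_eq_square algebra_simps)
      finally show ?thesis .
    qed
    show ?thesis using KK0 unfolding KK_def e1 e2 K2_def by (simp add: algebra_simps)
  qed
  define Pz where "Pz = G * z1^2 - 2 * Fc * z1 * z2 + E * z2^2"
  have iden: "K2 G (-Fc) + D * K2 0 1 = 2 * G * (2 * D - Pz) + 2 * G * (lam * (G * L11 - 2 * Fc * L12 + E * L22))"
    unfolding K2_def D_def Pz_def by (simp add: power2_eq_square algebra_simps)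
  have "K2 G (-Fc) + D * K2 0 1 \<le> 0" using K2[of G "-Fc"] K2[of 0 1] D
    by (smt (verit) mult_pos_neg zero_less_mult_iff mult_nonneg_nonpos)
  hence le: "2 * G * (2 * D - Pz) \<le> 0" using iden mean0 by simp
  have EG: "E \<ge> 0" "G \<ge> 0" unfolding E_def G_def fff_E_def fff_G_def by simp_all
  have Gpos: "G > 0"
  proof (rule ccontr)
    assume "\<not> G > 0" hence "G = 0" using EG by simp
    hence "D \<le> 0" unfolding D_def by simp
    thus False using D by simp
  qed
  have PzD: "Pz \<le> D"
  proof (rule ccontr)
    assume c: "\<not> Pz \<le> D"
    define s where "s = G * z1 - Fc * z2"
    define t where "t = E * z2 - Fc * z1"
    define Yv where "Yv = s *\<^sub>R pd 1 F x0 + t *\<^sub>R pd 2 F x0"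
    have "Yv \<bullet> e3 = Pz" unfolding Yv_def s_def t_def Pz_def z1_def z2_def
      by (simp add: inner_add_left inner_scaleR_left power2_eq_square algebra_simps)
    moreover have "Yv \<bullet> Yv = D * Pz" unfolding Yv_def s_def t_def Pz_def D_def E_def Fc_def G_def
        fff_E_def fff_F_def fff_G_def
      by (simp add: inner_add_left inner_add_right inner_scaleR_left inner_scaleR_right inner_commute
          power2_eq_square algebra_simps)
    moreover have "(Yv \<bullet> e3)^2 \<le> (Yv \<bullet> Yv) * (e3 \<bullet> e3)"
      using Cauchy_Schwarz_ineq[of Yv e3] .
    ultimately have "Pz^2 \<le> D * Pz" by simp
    moreover have "D * Pz < Pz * Pz" using c D by (simp add: mult_strict_right_mono)
    ultimately show False by (simp add: power2_eq_square)
  qed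
  have "2 * G * (2 * D - Pz) > 0" using Gpos PzD D by simp
  thus False using le by simp
qed



lemma hp_hp [simp]: "hp (hp x) = hp x" by (simp add: hp_def inner_diff_left algebra_simps)
lemma hp_e3' [simp]: "hp e3 = 0" by (simp add: hp_def)
lemma hp_horiz: "c \<bullet> e3 = 0 \<Longrightarrow> hp c = c" by (simp add: hp_def)

lemma norm_hp_le: "norm (hp x) \<le> norm x"
proof -
  have "(norm (hp x))^2 = (norm x)^2 - (x \<bullet> e3)^2"
    using hp_inner[of x x] by (simp only: power2_norm_eq_inner) (simp add: power2_eq_square)
  hence "(norm (hp x))^2 \<le> (norm x)^2" by simp
  thus ?thesis by (rule power2_le_imp_le) simp
qed

lemma norm_decomp: "norm x \<le> norm (hp x) + \<bar>x \<bullet> e3\<bar>"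
proof -
  have "x = hp x + (x \<bullet> e3) *\<^sub>R e3" by (simp add: hp_def)
  hence "norm x = norm (hp x + (x \<bullet> e3) *\<^sub>R e3)" by simp
  also have "\<dots> \<le> norm (hp x) + norm ((x \<bullet> e3) *\<^sub>R e3)" by (rule norm_triangle_ineq)
  finally show ?thesis by simp
qed

definition zeta :: "real \<Rightarrow> real" where "zeta t = sqrt (1 + t^2)"
definition zeta' :: "real \<Rightarrow> real" where "zeta' t = t / sqrt (1 + t^2)"

lemma zeta_ge: "zeta t \<ge> \<bar>t\<bar>" "zeta t \<ge> 1" "zeta t > 0"
  unfolding zeta_def by (auto intro: real_le_rsqrt simp: add_pos_nonneg)

lemma zeta'_bound: "\<bar>zeta' t\<bar> \<le> 1"
proof -
  have "\<bar>t\<bar> \<le> sqrt (1 + t^2)" by (auto intro: real_le_rsqrt)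
  moreover have "1 + t^2 > 0" by (simp add: add_pos_nonneg)
  hence "sqrt (1 + t^2) > 0" by simp
  ultimately show ?thesis unfolding zeta'_def by (simp add: abs_div divide_le_eq_1)
qed

lemma zeta_deriv: "((\<lambda>x. zeta (x \<bullet> e3 - z1)) has_derivative (\<lambda>h. (zeta' (x \<bullet> e3 - z1) *\<^sub>R e3) \<bullet> h)) (at x)"
proof -
  have pos: "0 < 1 + (x \<bullet> e3 - z1)^2" by (simp add: add_pos_nonneg)
  have "((\<lambda>x. sqrt (1 + (x \<bullet> e3 - z1)^2)) has_derivative
     (\<lambda>h. inverse (sqrt (1 + (x \<bullet> e3 - z1)^2)) / 2 * (2 * (x \<bullet> e3 - z1) * (h \<bullet> e3)))) (at x)"
    using pos by (auto intro!: derivative_eq_intros simp: power2_eq_square algebra_simps)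
  moreover have "(\<lambda>h. inverse (sqrt (1 + (x \<bullet> e3 - z1)^2)) / 2 * (2 * (x \<bullet> e3 - z1) * (h \<bullet> e3)))
      = (\<lambda>h. (zeta' (x \<bullet> e3 - z1) *\<^sub>R e3) \<bullet> h)"
    using pos by (auto simp: fun_eq_iff zeta'_def field_simps inner_commute)
  ultimately show ?thesis unfolding zeta_def by simp
qed

lemma cont_zeta: "continuous_on UNIV (\<lambda>x. zeta (x \<bullet> e3 - z1))"
  unfolding zeta_def by (intro continuous_intros)

lemma cont_hp: "continuous_on UNIV hp"
  unfolding hp_def by (intro continuous_intros)

lemma sq_bound: "(t::real)^2 \<le> M \<Longrightarrow> t \<le> 1 + M"
proof -
  assume a: "t^2 \<le> M"
  have "0 \<le> (t - 1/2)^2" by simp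
  hence "t \<le> t^2 + 1/4" by (simp add: power2_eq_square algebra_simps)
  thus ?thesis using a by simp
qed

lemma step2:
  assumes surf: "immersed_surface X f N" and proper: "proper_immersion X f"
    and epsR: "\<forall>p\<in>topspace X. norm (f p) > R \<longrightarrow> \<bar>N p \<bullet> e3\<bar> \<ge> \<epsilon>" and eps: "\<epsilon> > 0"
    and c: "c \<bullet> e3 = 0" and d0: "d0 > 0" "\<forall>p\<in>topspace X. norm (hp (f p) - c) \<ge> d0"
  shows "\<forall>p\<in>topspace X. norm (hp (f p) - c) \<ge> norm c - R"
proof (rule ccontr)
  assume "\<not> ?thesis"
  then obtain p1 where p1: "p1 \<in> topspace X" "norm (hp (f p1) - c) < norm c - R" by auto
  have cont: "continuous_map X euclidean f" using surf unfolding immersed_surface_def by blast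
  define r1 where "r1 = norm (hp (f p1) - c)"
  define z1 where "z1 = zeta (f p1 \<bullet> e3 - 0)"
  have r1: "0 \<le> r1" "r1 < norm c - R" using p1 unfolding r1_def by auto
  define gap where "gap = (norm c - R)^2 - r1^2"
  have gap: "gap > 0" unfolding gap_def using r1 by (simp add: power_strict_mono)
  have z1: "z1 > 0" unfolding z1_def using zeta_ge(3) .
  define \<delta> where "\<delta> = min (\<epsilon> * d0) (gap / (2 * z1))"
  have \<delta>: "\<delta> > 0" "\<delta> \<le> \<epsilon> * d0" "\<delta> * z1 \<le> gap / 2"
    using eps d0 gap z1 unfolding \<delta>_def by (auto simp: field_simps min_def)
  define W where "W = (\<lambda>x. - ((hp x - c) \<bullet> (hp x - c)) - \<delta> * zeta (x \<bullet> e3 - 0))"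
  have Wc: "continuous_on UNIV W" unfolding W_def
    by (intro continuous_intros cont_zeta continuous_on_compose2[OF cont_hp]) auto
  define M where "M = - W (f p1)"
  have bd: "bounded {x \<in> UNIV. W (f p1) \<le> W x}"
  proof -
    have "norm x \<le> norm c + (1 + M) + M / \<delta>" if x: "W (f p1) \<le> W x" for x
    proof -
      have A: "(hp x - c) \<bullet> (hp x - c) \<le> M" and B: "\<delta> * zeta (x \<bullet> e3 - 0) \<le> M"
        using x zeta_ge(3)[of "x \<bullet> e3 - 0"] \<delta>(1) unfolding M_def W_def
        by (smt (verit) inner_ge_zero mult_pos_pos)+
      have "norm (hp x - c) \<le> 1 + M"
      proof -
        have "(norm (hp x - c))^2 \<le> M" using A by (simp add: power2_norm_eq_inner)
        thus ?thesis by (rule sq_bound)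
      qed
      hence h1: "norm (hp x) \<le> norm c + (1 + M)" by (smt (verit) norm_triangle_ineq2 norm_minus_commute)
      have "\<delta> * \<bar>x \<bullet> e3\<bar> \<le> M" using B zeta_ge(1)[of "x \<bullet> e3 - 0"] \<delta>(1)
        by (smt (verit) diff_zero mult_left_mono)
      hence h2: "\<bar>x \<bullet> e3\<bar> \<le> M / \<delta>" using \<delta>(1) by (simp add: field_simps)
      show ?thesis using norm_decomp[of x] h1 h2 by simp
    qed
    thus ?thesis unfolding bounded_iff by blast
  qed
  obtain ps where ps: "ps \<in> topspace X" "\<forall>q\<in>topspace X. W (f q) \<le> W (f ps)"
    using exists_max[OF cont proper p1(1) Wc closed_UNIV _ bd] by blast
  show False
  proof (cases "norm (f ps) > R")
    case True
    hence eta: "\<bar>N ps \<bullet> e3\<bar> \<ge> \<epsilon>" using epsR ps(1) by blast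
    define x where "x = f ps"
    define g where "g = (-2) *\<^sub>R (hp x - c) - (\<delta> * zeta' (x \<bullet> e3 - 0)) *\<^sub>R e3"
    have he3: "(hp x - c) \<bullet> e3 = 0" using c by (simp add: inner_diff_left)
    have Wd: "(W has_derivative (\<lambda>h. g \<bullet> h)) (at x)"
    proof -
      have d1: "((\<lambda>x. (hp x - c) \<bullet> (hp x - c)) has_derivative (\<lambda>h. (hp x - c) \<bullet> hp h + hp h \<bullet> (hp x - c))) (at x)"
      proof -
        have dh: "((\<lambda>x. hp x - c) has_derivative hp) (at x)"
          using has_derivative_diff[OF bounded_linear.has_derivative[OF bl_hp has_derivative_ident] has_derivative_const[of c]]
          by simp
        show ?thesis by (intro has_derivative_inner dh)
      qed
      have "(W has_derivative (\<lambda>h. - ((hp x - c) \<bullet> hp h + hp h \<bullet> (hp x - c)) - \<delta> * ((zeta' (x \<bullet> e3 - 0) *\<^sub>R e3) \<bullet> h))) (at x)"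
        unfolding W_def by (intro has_derivative_diff has_derivative_minus d1 has_derivative_mult_right zeta_deriv)
      moreover have "(\<lambda>h. - ((hp x - c) \<bullet> hp h + hp h \<bullet> (hp x - c)) - \<delta> * ((zeta' (x \<bullet> e3 - 0) *\<^sub>R e3) \<bullet> h)) = (\<lambda>h. g \<bullet> h)"
      proof
        fix h
        have "(hp x - c) \<bullet> hp h = (hp x - c) \<bullet> h" using he3
          by (simp add: hp_def inner_diff_right)
        thus "- ((hp x - c) \<bullet> hp h + hp h \<bullet> (hp x - c)) - \<delta> * ((zeta' (x \<bullet> e3 - 0) *\<^sub>R e3) \<bullet> h) = g \<bullet> h"
          unfolding g_def by (simp add: inner_diff_left inner_diff_right inner_commute)
      qed
      ultimately show ?thesis by simp
    qed
    have par: "g = (g \<bullet> N ps) *\<^sub>R N ps"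
      by (rule first_order[OF surf ps(1) _ ps(2)]) (use Wd x_def in simp)
    have f1: "\<epsilon> * norm (hp g) \<le> \<bar>g \<bullet> e3\<bar>"
      by (rule foc[OF par unit_N[OF surf ps(1)] eta]) (use eps in simp)
    have hpg: "hp g = (-2) *\<^sub>R (hp x - c)" unfolding g_def using hp_lin bl_hp c
      by (simp add: linear_simps hp_horiz)
    have ge3: "g \<bullet> e3 = - (\<delta> * zeta' (x \<bullet> e3 - 0))" unfolding g_def using he3
      by (simp add: inner_diff_left)
    have "\<epsilon> * (2 * d0) \<le> \<epsilon> * norm (hp g)"
      using d0(2) ps(1) eps unfolding hpg x_def by simp
    also have "\<dots> \<le> \<delta> * \<bar>zeta' (x \<bullet> e3 - 0)\<bar>" using f1 ge3 \<delta>(1) by (simp add: abs_mult)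
    also have "\<dots> \<le> \<delta>" using zeta'_bound \<delta>(1) by (simp add: mult_left_le)
    finally have "\<epsilon> * (2 * d0) \<le> \<delta>" .
    moreover have "\<epsilon> * d0 > 0" using eps d0 by simp
    moreover have "\<epsilon> * (2 * d0) = 2 * (\<epsilon> * d0)" by simp
    ultimately show False using \<delta>(2) by linarith
  next
    case False
    have "norm (hp (f ps)) \<le> R" using False norm_hp_le[of "f ps"] by simp
    hence "norm (hp (f ps) - c) \<ge> norm c - R" by (smt (verit) norm_triangle_ineq2 norm_minus_commute)
    moreover have "norm c - R \<ge> 0" using r1 by simp
    ultimately have "(norm c - R)^2 \<le> (hp (f ps) - c) \<bullet> (hp (f ps) - c)"
      by (simp add: power2_norm_eq_inner[symmetric] power_mono)
    hence "W (f ps) \<le> -((norm c - R)^2)" unfolding W_def using \<delta>(1) zeta_ge(3)[of "f ps \<bullet> e3 - 0"]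
      by (smt (verit) mult_pos_pos)
    moreover have "W (f p1) = -(r1^2) - \<delta> * z1" unfolding W_def r1_def z1_def
      by (simp add: power2_norm_eq_inner)
    moreover have "W (f p1) \<le> W (f ps)" using ps p1 by blast
    ultimately show False using \<delta>(3) gap unfolding gap_def by simp
  qed
qed

lemma step3:
  assumes surf: "immersed_surface X f N" and proper: "proper_immersion X f"
    and epsR: "\<forall>p\<in>topspace X. norm (f p) > R \<longrightarrow> \<bar>N p \<bullet> e3\<bar> \<ge> \<epsilon>" and eps: "\<epsilon> > 0"
    and R: "R \<ge> 0" and v: "v \<noteq> 0" "v \<bullet> e3 = 0"
    and hb: "\<forall>p\<in>topspace X. norm (hp (f p)) \<le> R2"
    and p1: "p1 \<in> topspace X" and big: "norm (f p1) > R2 + 2 * (R + R2) / \<epsilon> + 1 + R"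
  shows False
proof -
  have cont: "continuous_map X euclidean f" using surf unfolding immersed_surface_def by blast
  have nv: "norm v > 0" using v by simp
  define \<delta> where "\<delta> = \<epsilon> * norm v / 2"
  have \<delta>: "\<delta> > 0" unfolding \<delta>_def using eps nv by simp
  define z1 where "z1 = f p1 \<bullet> e3"
  define W where "W = (\<lambda>x. x \<bullet> v - \<delta> * zeta (x \<bullet> e3 - z1))"
  have Wc: "continuous_on UNIV W" unfolding W_def by (intro continuous_intros cont_zeta)
  define C where "C = {x. norm (hp x) \<le> R2}"
  have C: "closed C" unfolding C_def
    by (intro closed_Collect_le continuous_on_compose2[OF cont_hp] continuous_intros) auto
  have xv: "x \<bullet> v = hp x \<bullet> v" for x using v(2) by (simp add: hp_def inner_diff_left inner_diff_right inner_commute)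
  have xvb: "\<bar>x \<bullet> v\<bar> \<le> norm (hp x) * norm v" for x
    using Cauchy_Schwarz_ineq2[of "hp x" v] xv[of x] by simp
  define M where "M = R2 * norm v - W (f p1)"
  have bd: "bounded {x \<in> C. W (f p1) \<le> W x}"
  proof -
    have "norm x \<le> R2 + (\<bar>z1\<bar> + M / \<delta>)" if x: "x \<in> C" "W (f p1) \<le> W x" for x
    proof -
      have h1: "norm (hp x) \<le> R2" using x(1) unfolding C_def by simp
      have "x \<bullet> v \<le> R2 * norm v" using xvb[of x] h1 nv by (smt (verit) mult_right_mono)
      hence "\<delta> * zeta (x \<bullet> e3 - z1) \<le> M" using x(2) unfolding M_def W_def by simp
      hence "\<delta> * \<bar>x \<bullet> e3 - z1\<bar> \<le> M" using zeta_ge(1)[of "x \<bullet> e3 - z1"] \<delta>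
        by (smt (verit) mult_left_mono)
      hence "\<bar>x \<bullet> e3 - z1\<bar> \<le> M / \<delta>" using \<delta> by (simp add: field_simps)
      hence "\<bar>x \<bullet> e3\<bar> \<le> \<bar>z1\<bar> + M / \<delta>" by simp
      thus ?thesis using norm_decomp[of x] h1 by simp
    qed
    thus ?thesis unfolding bounded_iff by blast
  qed
  have fC: "\<forall>p\<in>topspace X. f p \<in> C" using hb unfolding C_def by simp
  obtain ps where ps: "ps \<in> topspace X" "\<forall>q\<in>topspace X. W (f q) \<le> W (f ps)"
    using exists_max[OF cont proper p1 Wc C fC bd] by blast
  show False
  proof (cases "norm (f ps) > R")
    case True
    hence eta: "\<bar>N ps \<bullet> e3\<bar> \<ge> \<epsilon>" using epsR ps(1) by blast
    define x where "x = f ps"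
    define g where "g = v - (\<delta> * zeta' (x \<bullet> e3 - z1)) *\<^sub>R e3"
    have Wd: "(W has_derivative (\<lambda>h. g \<bullet> h)) (at x)"
    proof -
      have "(W has_derivative (\<lambda>h. v \<bullet> h - \<delta> * ((zeta' (x \<bullet> e3 - z1) *\<^sub>R e3) \<bullet> h))) (at x)"
        unfolding W_def
        by (intro has_derivative_diff has_derivative_mult_right zeta_deriv)
          (auto intro!: derivative_eq_intros simp: inner_commute)
      moreover have "(\<lambda>h. v \<bullet> h - \<delta> * ((zeta' (x \<bullet> e3 - z1) *\<^sub>R e3) \<bullet> h)) = (\<lambda>h. g \<bullet> h)"
        unfolding g_def by (simp add: fun_eq_iff inner_diff_left)
      ultimately show ?thesis by simp
    qed
    have par: "g = (g \<bullet> N ps) *\<^sub>R N ps"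
      by (rule first_order[OF surf ps(1) _ ps(2)]) (use Wd x_def in simp)
    have f1: "\<epsilon> * norm (hp g) \<le> \<bar>g \<bullet> e3\<bar>"
      by (rule foc[OF par unit_N[OF surf ps(1)] eta]) (use eps in simp)
    have hpg: "hp g = v" unfolding g_def using bl_hp v(2)
      by (simp add: linear_simps hp_horiz)
    have ge3: "g \<bullet> e3 = - (\<delta> * zeta' (x \<bullet> e3 - z1))" unfolding g_def using v(2)
      by (simp add: inner_diff_left)
    have "\<epsilon> * norm v \<le> \<delta> * \<bar>zeta' (x \<bullet> e3 - z1)\<bar>" using f1 ge3 hpg \<delta> by (simp add: abs_mult)
    also have "\<dots> \<le> \<delta>" using zeta'_bound \<delta> by (simp add: mult_left_le)
    finally show False unfolding \<delta>_def using eps nv by simp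
  next
    case False
    define zs where "zs = f ps \<bullet> e3"
    have zs: "\<bar>zs\<bar> \<le> R" unfolding zs_def using False Cauchy_Schwarz_ineq2[of "f ps" e3] by simp
    have "f ps \<bullet> v \<le> norm (f ps) * norm v" using Cauchy_Schwarz_ineq2[of "f ps" v] by simp
    also have "\<dots> \<le> R * norm v" using False nv by (simp add: mult_right_mono)
    finally have a1: "f ps \<bullet> v \<le> R * norm v" .
    have "\<bar>zs - z1\<bar> \<le> zeta (zs - z1)" using zeta_ge(1) .
    hence "W (f ps) \<le> R * norm v - \<delta> * \<bar>zs - z1\<bar>" unfolding W_def zs_def[symmetric] using a1 \<delta>
      by (smt (verit) mult_left_mono)
    moreover have "W (f p1) \<ge> - R2 * norm v - \<delta>"
    proof -
      have "\<bar>f p1 \<bullet> v\<bar> \<le> R2 * norm v" using xvb[of "f p1"] hb p1 nv by (smt (verit) mult_right_mono)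
      moreover have "zeta (f p1 \<bullet> e3 - z1) = 1" unfolding zeta_def z1_def by simp
      ultimately show ?thesis unfolding W_def by simp
    qed
    moreover have "W (f p1) \<le> W (f ps)" using ps p1 by blast
    ultimately have "\<delta> * \<bar>zs - z1\<bar> \<le> (R + R2) * norm v + \<delta>" by (simp add: algebra_simps)
    hence "\<bar>zs - z1\<bar> \<le> ((R + R2) * norm v + \<delta>) / \<delta>" using \<delta> by (simp add: field_simps)
    also have "\<dots> = 2 * (R + R2) / \<epsilon> + 1" unfolding \<delta>_def using eps nv by (simp add: field_simps)
    finally have "\<bar>z1\<bar> \<le> 2 * (R + R2) / \<epsilon> + 1 + R" using zs by simp
    moreover have "norm (f p1) \<le> R2 + \<bar>z1\<bar>"
    proof -
      have "norm (hp (f p1)) \<le> R2" using hb p1 by blast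
      thus ?thesis using norm_decomp[of "f p1"] unfolding z1_def by linarith
    qed
    ultimately show False using big by simp
  qed
qed



lemma step2b:
  assumes surf: "immersed_surface X f N" and proper: "proper_immersion X f"
    and epsR: "\<forall>p\<in>topspace X. norm (f p) > R \<longrightarrow> \<bar>N p \<bullet> e3\<bar> \<ge> \<epsilon>" and eps: "\<epsilon> > 0"
    and R: "R \<ge> 0" and v: "v \<noteq> 0" "v \<bullet> e3 = 0"
    and halfspace: "\<forall>p\<in>topspace X. f p \<bullet> v \<le> 0"
  shows "\<forall>p\<in>topspace X. norm (hp (f p)) \<le> R + 2"
proof (rule ccontr)
  assume "\<not> ?thesis"
  then obtain p0 where p0: "p0 \<in> topspace X" "norm (hp (f p0)) > R + 2" by auto
  define good where "good = (\<lambda>c. \<forall>d>0. \<exists>p\<in>topspace X. norm (hp (f p) - c) < d)"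
  have stp: "good c'" if gc: "good c" and c: "norm c > R + 2" and c': "c' \<bullet> e3 = 0"
      and cc: "norm (c' - c) \<le> 1/2" for c c'
    unfolding good_def
  proof (rule ccontr)
    assume "\<not> (\<forall>d>0. \<exists>p\<in>topspace X. norm (hp (f p) - c') < d)"
    then obtain d0 where d0': "d0 > 0" and nn: "\<not> (\<exists>p\<in>topspace X. norm (hp (f p) - c') < d0)"
      by blast
    have d0: "d0 > 0" "\<forall>p\<in>topspace X. norm (hp (f p) - c') \<ge> d0"
      using d0' nn by (auto simp: not_less)
    have far: "\<forall>p\<in>topspace X. norm (hp (f p) - c') \<ge> norm c' - R"
      by (rule step2[OF surf proper epsR eps c' d0])
    have "\<exists>p\<in>topspace X. norm (hp (f p) - c) < 1/2" using gc[unfolded good_def, rule_format, of "1/2"] by simp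
    then obtain p where p: "p \<in> topspace X" "norm (hp (f p) - c) < 1/2" by blast
    have "norm (hp (f p) - c') \<le> norm (hp (f p) - c) + norm (c - c')"
      using norm_triangle_ineq[of "hp (f p) - c" "c - c'"] by simp
    also have "\<dots> < 1" using p(2) cc by (simp add: norm_minus_commute)
    finally have "norm (hp (f p) - c') < 1" .
    moreover have "norm c' \<ge> norm c - 1/2" using cc norm_triangle_ineq2[of c c'] by (simp add: norm_minus_commute)
    ultimately show False using far p(1) c by fastforce
  qed
  have chain: "good (a + (real k / 2) *\<^sub>R d)"
    if ga: "good a" and ae: "a \<bullet> e3 = 0" and de: "d \<bullet> e3 = 0" and dn: "norm d = 1"
      and out: "\<forall>k::nat. norm (a + (real k / 2) *\<^sub>R d) > R + 2" for a d k
  proof (induction k)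
    case 0 then show ?case using ga by simp
  next
    case (Suc k)
    show ?case
    proof (rule stp[OF Suc.IH out[rule_format, of k]])
      show "(a + (real (Suc k) / 2) *\<^sub>R d) \<bullet> e3 = 0" using ae de by (simp add: inner_add_left)
      have "(a + (real (Suc k) / 2) *\<^sub>R d) - (a + (real k / 2) *\<^sub>R d) = (1/2) *\<^sub>R d"
      proof -
        have "real (Suc k) / 2 = real k / 2 + 1/2" by (simp add: add_divide_distrib)
        hence "(real (Suc k) / 2) *\<^sub>R d = (real k / 2) *\<^sub>R d + (1/2) *\<^sub>R d"
          by (simp only: scaleR_add_left)
        thus ?thesis by simp
      qed
      thus "norm ((a + (real (Suc k) / 2) *\<^sub>R d) - (a + (real k / 2) *\<^sub>R d)) \<le> 1/2" using dn by simp
    qed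
  qed
  define y0 where "y0 = hp (f p0)"
  have gy0: "good y0" unfolding good_def y0_def using p0(1) by (intro allI impI bexI[of _ p0]) simp_all
  have y0e: "y0 \<bullet> e3 = 0" unfolding y0_def by simp
  have nv: "norm v > 0" using v by simp
  define w0 where "w0 = cross3 e3 v"
  have "(norm w0)^2 = (norm v)^2" using norm_cross[of e3 v] v(2) unfolding w0_def by (simp add: inner_commute)
  hence nw0: "norm w0 = norm v" by (simp add: power2_eq_iff_nonneg)
  define w where "w = (1 / norm v) *\<^sub>R w0"
  have wn: "norm w = 1" unfolding w_def using nw0 nv by simp
  have we: "w \<bullet> e3 = 0" unfolding w_def w0_def by (simp add: dot_cross_self)
  have wv: "w \<bullet> v = 0" unfolding w_def w0_def by (simp add: dot_cross_self)
  define \<sigma> where "\<sigma> = (if y0 \<bullet> w \<ge> 0 then 1 else -1 :: real)"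
  define d1 where "d1 = \<sigma> *\<^sub>R w"
  have d1: "norm d1 = 1" "d1 \<bullet> e3 = 0" "y0 \<bullet> d1 \<ge> 0" "d1 \<bullet> w = \<sigma>"
    unfolding d1_def \<sigma>_def using wn we by (auto simp: power2_norm_eq_inner[symmetric])
  have out1: "\<forall>k::nat. norm (y0 + (real k / 2) *\<^sub>R d1) > R + 2"
  proof
    fix k :: nat
    define s where "s = real k / 2"
    have dd: "d1 \<bullet> d1 = 1" using d1(1) by (simp add: power2_norm_eq_inner[symmetric])
    have "(norm (y0 + s *\<^sub>R d1))^2 = (y0 + s *\<^sub>R d1) \<bullet> (y0 + s *\<^sub>R d1)"
      by (simp only: power2_norm_eq_inner)
    also have "\<dots> = y0 \<bullet> y0 + 2 * s * (y0 \<bullet> d1) + s^2 * (d1 \<bullet> d1)"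
      by (simp add: inner_add_left inner_add_right inner_commute power2_eq_square algebra_simps)
    also have "\<dots> = (norm y0)^2 + 2 * s * (y0 \<bullet> d1) + s^2"
      using dd by (simp add: power2_norm_eq_inner)
    also have "\<dots> \<ge> (norm y0)^2" using d1(3) unfolding s_def by simp
    finally have "norm (y0 + s *\<^sub>R d1) \<ge> norm y0" by (rule power2_le_imp_le) simp
    thus "norm (y0 + (real k / 2) *\<^sub>R d1) > R + 2" using p0(2) unfolding s_def y0_def by simp
  qed
  define K1 :: nat where "K1 = nat \<lceil>2 * (R + 3)\<rceil>"
  have K1: "real K1 / 2 \<ge> R + 3" unfolding K1_def using real_nat_ceiling_ge[of "2 * (R + 3)"] by (simp add: field_simps)
  define a1 where "a1 = y0 + (real K1 / 2) *\<^sub>R d1"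
  have ga1: "good a1" unfolding a1_def by (rule chain[OF gy0 y0e d1(2) d1(1) out1])
  have a1e: "a1 \<bullet> e3 = 0" unfolding a1_def using y0e d1(2) by (simp add: inner_add_left)
  have a1w: "\<bar>a1 \<bullet> w\<bar> \<ge> R + 3"
  proof -
    have "a1 \<bullet> w = y0 \<bullet> w + (real K1 / 2) * \<sigma>" unfolding a1_def using d1(4) by (simp add: inner_add_left)
    thus ?thesis unfolding \<sigma>_def using K1 by (auto split: if_splits)
  qed
  define vh where "vh = (1 / norm v) *\<^sub>R v"
  have vh: "norm vh = 1" "vh \<bullet> e3 = 0" "vh \<bullet> w = 0" "vh \<bullet> v = norm v"
    unfolding vh_def using nv v(2) wv by (auto simp: inner_commute power2_norm_eq_inner[symmetric] power2_eq_square)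
  have out2: "\<forall>k::nat. norm (a1 + (real k / 2) *\<^sub>R vh) > R + 2"
  proof
    fix k :: nat
    have "(a1 + (real k / 2) *\<^sub>R vh) \<bullet> w = a1 \<bullet> w" using vh(3) by (simp add: inner_add_left)
    moreover have "\<bar>(a1 + (real k / 2) *\<^sub>R vh) \<bullet> w\<bar> \<le> norm (a1 + (real k / 2) *\<^sub>R vh)"
      using Cauchy_Schwarz_ineq2[of "a1 + (real k / 2) *\<^sub>R vh" w] wn by simp
    ultimately show "norm (a1 + (real k / 2) *\<^sub>R vh) > R + 2" using a1w by simp
  qed
  define K2 :: nat where "K2 = nat \<lceil>2 * \<bar>a1 \<bullet> v\<bar> / norm v\<rceil> + 1"
  define c where "c = a1 + (real K2 / 2) *\<^sub>R vh"
  have gc: "good c" unfolding c_def by (rule chain[OF ga1 a1e vh(2) vh(1) out2])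
  have cv: "c \<bullet> v > 0"
  proof -
    have "c \<bullet> v = a1 \<bullet> v + (real K2 / 2) * norm v" unfolding c_def using vh(4) by (simp add: inner_add_left)
    moreover have "real K2 / 2 > \<bar>a1 \<bullet> v\<bar> / norm v"
    proof -
      have A: "2 * \<bar>a1 \<bullet> v\<bar> / norm v \<le> real K2 - 1"
        using real_nat_ceiling_ge[of "2 * \<bar>a1 \<bullet> v\<bar> / norm v"] unfolding K2_def by simp
      have B: "\<bar>a1 \<bullet> v\<bar> / norm v = (2 * \<bar>a1 \<bullet> v\<bar> / norm v) / 2" by simp
      show ?thesis using A B by linarith
    qed
    hence "(real K2 / 2) * norm v > \<bar>a1 \<bullet> v\<bar>" using nv by (simp add: field_simps)
    ultimately show ?thesis by linarith
  qed
  obtain p where p: "p \<in> topspace X" "norm (hp (f p) - c) < (c \<bullet> v) / norm v"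
  proof -
    have "(c \<bullet> v) / norm v > 0" using cv nv by simp
    thus ?thesis using gc[unfolded good_def, rule_format, of "(c \<bullet> v) / norm v"] that by blast
  qed
  have "hp (f p) \<bullet> v = f p \<bullet> v" using v(2) by (simp add: hp_def inner_diff_left inner_diff_right inner_commute)
  hence hv: "hp (f p) \<bullet> v \<le> 0" using halfspace p(1) by simp
  have "(c - hp (f p)) \<bullet> v \<le> norm (c - hp (f p)) * norm v" by (rule Cauchy_Schwarz_ineq2[THEN abs_le_D1])
  also have "\<dots> < ((c \<bullet> v) / norm v) * norm v"
    using p(2) nv by (intro mult_strict_right_mono) (simp_all add: norm_minus_commute)
  also have "\<dots> = c \<bullet> v" using nv by simp
  finally show False using hv by (simp add: inner_diff_left)
qed



theorem corollary5p1:
  fixes \<phi> :: "real \<Rightarrow> real" and \<G> :: "real \<Rightarrow> real" and B :: real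
    and X :: "'a topology" and f N :: "'a \<Rightarrow> real^3" and v :: "real^3"
  assumes phi_smooth: "smooth_on \<phi> UNIV"
    and G_smooth: "\<exists>S. open S \<and> {0..} \<subseteq> S \<and> smooth_on \<G> S"
    and G0: "\<G> 0 > 0"
    and G_mono: "\<forall>t\<ge>0. deriv \<G> t \<ge> 0"
    and G_nonint: "\<not> set_integrable lborel {0..} (\<lambda>t. \<G> t powr (-1/2))"
    and G_limsup: "Limsup at_top (\<lambda>t. ereal (t * \<G> (sqrt t) / \<G> t)) < \<infinity>"
    and B_pos: "B > 0"
    and surf: "immersed_surface X f N"
    and proper: "proper_immersion X f"
    and minimal: "phi_minimal \<phi> X f N"
    and growth: "\<exists>K. compactin X K \<and>
        (\<forall>p\<in>topspace X - K. \<bar>deriv \<phi> (f p \<bullet> e3)\<bar> \<le> B * sqrt (\<G> (norm (f p))))"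
    and v_nz: "v \<noteq> 0" and v_hor: "v \<bullet> e3 = 0"
    and halfspace: "\<forall>p\<in>topspace X. f p \<bullet> v \<le> 0"
  shows "(\<exists>c. f ` topspace X = {y. y \<bullet> v = c})
    \<or> ((\<nexists>c. f ` topspace X = {y. y \<bullet> v = c}) \<and>
       (\<exists>p. (\<forall>n. p n \<in> topspace X) \<and> divergent_seq X p \<and>
            (\<lambda>n. N (p n) \<bullet> e3) \<longlonglongrightarrow> 0))"
proof -
  have cont: "continuous_map X euclidean f" using surf unfolding immersed_surface_def by blast
  have ne: "topspace X \<noteq> {}" using surf unfolding immersed_surface_def by blast
  have claim: "\<exists>p\<in>topspace X. norm (f p) > real n \<and> \<bar>N p \<bullet> e3\<bar> < 1 / (real n + 1)" for n :: nat
  proof (rule ccontr)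
    assume "\<not> ?thesis"
    hence epsR: "\<forall>p\<in>topspace X. norm (f p) > real n \<longrightarrow> \<bar>N p \<bullet> e3\<bar> \<ge> 1 / (real n + 1)"
      by (auto simp: not_less)
    have eps: "1 / (real n + 1) > 0" by simp
    have R: "real n \<ge> 0" by simp
    show False
    proof (cases "\<exists>M. \<forall>p\<in>topspace X. norm (f p) \<le> M")
      case True
      then obtain M where M: "\<forall>p\<in>topspace X. norm (f p) \<le> M" by blast
      obtain p1 where p1: "p1 \<in> topspace X" using ne by blast
      have Wc: "continuous_on UNIV (\<lambda>y. hp y \<bullet> hp y)"
        by (intro continuous_on_inner cont_hp)
      have fC: "\<forall>p\<in>topspace X. f p \<in> cball 0 M" using M by simp
      have bd: "bounded {x \<in> cball 0 M. hp (f p1) \<bullet> hp (f p1) \<le> hp x \<bullet> hp x}"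
        by (rule bounded_subset[OF bounded_cball[of 0 M]]) auto
      obtain ps where ps: "ps \<in> topspace X" "\<forall>q\<in>topspace X. hp (f q) \<bullet> hp (f q) \<le> hp (f ps) \<bullet> hp (f ps)"
        using exists_max[OF cont proper p1 Wc closed_cball fC bd] by blast
      show False by (rule no_max_hq[OF surf minimal ps])
    next
      case False
      have hb: "\<forall>p\<in>topspace X. norm (hp (f p)) \<le> real n + 2"
        by (rule step2b[OF surf proper epsR eps R v_nz v_hor halfspace])
      obtain p1 where p1: "p1 \<in> topspace X"
        "norm (f p1) > (real n + 2) + 2 * (real n + (real n + 2)) / (1 / (real n + 1)) + 1 + real n"
        using False by (meson not_le)
      show False by (rule step3[OF surf proper epsR eps R v_nz v_hor hb p1])
    qed
  qed
  then obtain P where P: "\<And>n. P n \<in> topspace X" "\<And>n. norm (f (P n)) > real n"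
      "\<And>n. \<bar>N (P n) \<bullet> e3\<bar> < 1 / (real n + 1)"
    by metis
  have div: "divergent_seq X P"
    unfolding divergent_seq_def
  proof (intro allI impI)
    fix K assume K: "compactin X K"
    hence "compact (f ` K)" using image_compactin[OF K cont] by simp
    then obtain Bd where Bd: "\<forall>x\<in>f ` K. norm x \<le> Bd" using compact_imp_bounded bounded_iff by metis
    show "\<forall>\<^sub>F n in sequentially. P n \<notin> K"
      unfolding eventually_sequentially
    proof (intro exI allI impI)
      fix n assume n: "nat \<lceil>Bd\<rceil> \<le> n"
      have "Bd \<le> real n" using n real_nat_ceiling_ge[of Bd] by linarith
      hence "norm (f (P n)) > Bd" using P(2)[of n] by simp
      thus "P n \<notin> K" using Bd by auto
    qed
  qed
  have lim: "(\<lambda>n. N (P n) \<bullet> e3) \<longlonglongrightarrow> 0"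
  proof (rule Lim_null_comparison[OF _ LIMSEQ_inverse_real_of_nat])
    show "\<forall>\<^sub>F n in sequentially. norm (N (P n) \<bullet> e3) \<le> inverse (real (Suc n))"
      using P(3) by (auto intro!: always_eventually less_imp_le simp: inverse_eq_divide add.commute)
  qed
  show ?thesis
  proof (cases "\<exists>c. f ` topspace X = {y. y \<bullet> v = c}")
    case True then show ?thesis by blast
  next
    case False then show ?thesis using P(1) div lim by blast
  qed
qed

end
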